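(* Let $P$ be a shortest path (a path of minimum length between its two end vertices) in a honeycomb toroidal graph $\mathrm{HTG}(m,n,\ell)$. Then all jump edges of $P$ are traversed in the same direction along $P$: either every jump edge of $P$ is traversed from its end $u_{m-1,j}$ to its end $u_{0,j+\ell}$, or every jump edge of $P$ is traversed from $u_{0,j+\ell}$ to $u_{m-1,j}$.
   Context: Honeycomb toroidal graph: let $m\ge 1$ be an integer, $n\ge 4$ an even integer, and $\ell$ an integer with $\ell\equiv m \pmod 2$. The graph $\mathrm{HTG}(m,n,\ell)$ has vertex set $\{u_{i,j}: 0\le i\le m-1,\ j\in\mathbb{Z}_n\}$ (second subscripts are taken modulo $n$; the vertices $u_{i,0},\dots,u_{i,n-1}$ form column $i$) and the following edges: vertical edges $u_{i,j}u_{i,j+1}$ for all $0\le i\le m-1$ and all $j$; flat edges $u_{i,j}u_{i+1,j}$ for $0\le i\le m-2$ and all $j$ with $i+j$ odd; jump edges $u_{m-1,j}u_{0,j+\ell}$ for all $j$ with $j\equiv m\pmod 2$. Only parameters for which this is a simple 3-regular graph are allowed (in particular, when $m=1$ one requires $\ell\not\equiv\pm1\pmod n$). For a jump edge $u_{m-1,j}u_{0,j+\ell}$ (with $j\equiv m\pmod 2$), $u_{m-1,j}$ is its column-$(m-1)$ end and $u_{0,j+\ell}$ its column-$0$ end, even when $m=1$. *)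

theory Defs
  imports Main
begin

definition htg_V :: "nat \<Rightarrow> nat \<Rightarrow> (nat \<times> nat) set" where
  "htg_V m n = {(i, j). i < m \<and> j < n}"

definition htg_vertical :: "nat \<Rightarrow> nat \<times> nat \<Rightarrow> nat \<times> nat \<Rightarrow> bool" where
  "htg_vertical n x y \<longleftrightarrow> fst x = fst y \<and>
     (snd y = (snd x + 1) mod n \<or> snd x = (snd y + 1) mod n)"

definition htg_flat :: "nat \<Rightarrow> nat \<times> nat \<Rightarrow> nat \<times> nat \<Rightarrow> bool" where
  "htg_flat m x y \<longleftrightarrow> snd x = snd y \<and>
     ((fst x + 1 = fst y \<and> fst y < m \<and> odd (fst x + snd x)) \<or>
      (fst y + 1 = fst x \<and> fst x < m \<and> odd (fst y + snd y)))"

definition htg_jump_fwd :: "nat \<Rightarrow> nat \<Rightarrow> int \<Rightarrow> nat \<times> nat \<Rightarrow> nat \<times> nat \<Rightarrow> bool" where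
  "htg_jump_fwd m n l x y \<longleftrightarrow> fst x = m - 1 \<and> fst y = 0 \<and> snd x < n \<and>
     snd x mod 2 = m mod 2 \<and> int (snd y) = (int (snd x) + l) mod int n"

definition htg_adj :: "nat \<Rightarrow> nat \<Rightarrow> int \<Rightarrow> nat \<times> nat \<Rightarrow> nat \<times> nat \<Rightarrow> bool" where
  "htg_adj m n l x y \<longleftrightarrow> x \<in> htg_V m n \<and> y \<in> htg_V m n \<and>
     (htg_vertical n x y \<or> htg_flat m x y \<or> htg_jump_fwd m n l x y \<or> htg_jump_fwd m n l y x)"

text \<open>Admissible parameters: m \<ge> 1, n \<ge> 4 even, l \<equiv> m (mod 2), and the resulting
  graph is simple (loopless, no parallel edges) and 3-regular; since each vertex
  has three incident edges counted with multiplicity, this is equivalent to each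
  vertex having exactly three distinct neighbours, none equal to itself.\<close>
definition htg_params :: "nat \<Rightarrow> nat \<Rightarrow> int \<Rightarrow> bool" where
  "htg_params m n l \<longleftrightarrow> m \<ge> 1 \<and> n \<ge> 4 \<and> even n \<and> l mod 2 = int m mod 2 \<and>
     (\<forall>v \<in> htg_V m n. \<not> htg_adj m n l v v \<and> card {w. htg_adj m n l v w} = 3)"

text \<open>A path: nonempty list of distinct vertices, consecutive ones adjacent.
  Its length is the number of edges, length - 1.\<close>
definition htg_path :: "nat \<Rightarrow> nat \<Rightarrow> int \<Rightarrow> (nat \<times> nat) list \<Rightarrow> bool" where
  "htg_path m n l P \<longleftrightarrow> P \<noteq> [] \<and> distinct P \<and> set P \<subseteq> htg_V m n \<and>
     (\<forall>k. Suc k < length P \<longrightarrow> htg_adj m n l (P ! k) (P ! Suc k))"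

definition htg_shortest_path :: "nat \<Rightarrow> nat \<Rightarrow> int \<Rightarrow> (nat \<times> nat) list \<Rightarrow> bool" where
  "htg_shortest_path m n l P \<longleftrightarrow> htg_path m n l P \<and>
     (\<forall>Q. htg_path m n l Q \<and> hd Q = hd P \<and> last Q = last P \<longrightarrow> length P \<le> length Q)"

end

theory Submission
  imports Defs
begin

definition sig :: "nat \<Rightarrow> nat \<Rightarrow> int \<Rightarrow> nat \<times> nat \<Rightarrow> nat \<times> nat" where
 "sig m n l x = (m - 1 - fst x, nat ((int (snd x) - l) mod int n))"

lemma vert_aux:
  fixes x y n :: nat and l :: int
  assumes "n > 0" "y = (x + 1) mod n"
  shows "nat ((int y - l) mod int n) = (nat ((int x - l) mod int n) + 1) mod n"
proof -
  have "int y = (int x + 1) mod int n" using assms by (simp add: zmod_int add.commute)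
  hence a: "(int y - l) mod int n = (int x - l + 1) mod int n"
    by (metis add.commute add_diff_eq diff_add_eq mod_diff_left_eq)
  have "int ((nat ((int x - l) mod int n) + 1) mod n) = ((int x - l) mod int n + 1) mod int n"
    using assms by (simp add: zmod_int add.commute)
  also have "\<dots> = (int x - l + 1) mod int n" by (metis add.commute mod_add_left_eq)
  finally show ?thesis using a assms by (metis nat_int pos_mod_sign of_nat_0_less_iff nat_0_le)
qed

lemma par_aux:
  fixes y n :: nat and l :: int
  assumes "even n" "n > 0"
  shows "int (nat ((int y - l) mod int n)) mod 2 = (int y - l) mod 2"
proof -
  have "even (int n)" using assms by simp
  hence "((int y - l) mod int n) mod 2 = (int y - l) mod 2" by (simp add: mod_mod_cancel)
  thus ?thesis using assms by simp
qed

lemma sig_V: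
  assumes "m \<ge> 1" "n > 0"
  shows "sig m n l x \<in> htg_V m n"
  using assms by (auto simp: sig_def htg_V_def nat_less_iff)

lemma sig_vert:
  assumes "n > 0" "htg_vertical n x y"
  shows "htg_vertical n (sig m n l x) (sig m n l y)"
  using assms vert_aux[OF assms(1)] unfolding htg_vertical_def sig_def by auto

lemma sig_flat:
  assumes "n > 0" "even n" "l mod 2 = int m mod 2" "htg_flat m x y"
  shows "htg_flat m (sig m n l x) (sig m n l y)"
proof -
  have e: "int (nat ((int (snd x) - l) mod int n)) mod 2 = (int (snd x) - l) mod 2"
    using par_aux assms by blast
  show ?thesis using assms(4) unfolding htg_flat_def sig_def fst_conv snd_conv
  proof (elim conjE disjE)
    assume h: "snd x = snd y" "fst x + 1 = fst y" "fst y < m" "odd (fst x + snd x)"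
    have "odd (int (m - 1 - fst y) + int (nat ((int (snd x) - l) mod int n)))"
    proof -
      obtain T where T: "T = int (nat ((int (snd x) - l) mod int n))" by simp
      have i: "int (m - 1 - fst y) = int m - 1 - int (fst y)" using h by auto
      have eT: "T mod 2 = (int (snd x) - l) mod 2" using e T by simp
      have o: "odd (int (fst x) + int (snd x))" using h by (metis even_of_nat of_nat_add)
      have f: "int (fst x) + 1 = int (fst y)" using h by simp
      have "odd (int m - 1 - int (fst y) + T)" using eT o f assms(3) by presburger
      thus ?thesis using T i by simp
    qed
    hence "odd (m - 1 - fst y + nat ((int (snd y) - l) mod int n))" using h
      by (metis even_of_nat of_nat_add)
    thus "nat ((int (snd x) - l) mod int n) = nat ((int (snd y) - l) mod int n) \<and>
      (m - 1 - fst x + 1 = m - 1 - fst y \<and> m - 1 - fst y < m \<and> odd (m - 1 - fst x + nat ((int (snd x) - l) mod int n)) \<or>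
       m - 1 - fst y + 1 = m - 1 - fst x \<and> m - 1 - fst x < m \<and> odd (m - 1 - fst y + nat ((int (snd y) - l) mod int n)))"
      using h by auto
  next
    assume h: "snd x = snd y" "fst y + 1 = fst x" "fst x < m" "odd (fst y + snd y)"
    have "odd (int (m - 1 - fst x) + int (nat ((int (snd x) - l) mod int n)))"
    proof -
      obtain T where T: "T = int (nat ((int (snd x) - l) mod int n))" by simp
      have i: "int (m - 1 - fst x) = int m - 1 - int (fst x)" using h by auto
      have eT: "T mod 2 = (int (snd x) - l) mod 2" using e T by simp
      have o: "odd (int (fst y) + int (snd x))" using h by (metis even_of_nat of_nat_add)
      have f: "int (fst y) + 1 = int (fst x)" using h by simp
      have "odd (int m - 1 - int (fst x) + T)" using eT o f assms(3) by presburger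
      thus ?thesis using T i by simp
    qed
    hence "odd (m - 1 - fst x + nat ((int (snd x) - l) mod int n))" using h
      by (metis even_of_nat of_nat_add)
    thus "nat ((int (snd x) - l) mod int n) = nat ((int (snd y) - l) mod int n) \<and>
      (m - 1 - fst x + 1 = m - 1 - fst y \<and> m - 1 - fst y < m \<and> odd (m - 1 - fst x + nat ((int (snd x) - l) mod int n)) \<or>
       m - 1 - fst y + 1 = m - 1 - fst x \<and> m - 1 - fst x < m \<and> odd (m - 1 - fst y + nat ((int (snd y) - l) mod int n)))"
      using h by auto
  qed
qed

lemma sig_jump:
  assumes "n > 0" "htg_jump_fwd m n l x y" "snd y < n"
  shows "sig m n l y = x"
proof -
  have "int (snd x) mod int n = int (snd x)" using assms unfolding htg_jump_fwd_def by simp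
  hence "(int (snd y) - l) mod int n = int (snd x)" using assms unfolding htg_jump_fwd_def
    by (metis add_diff_cancel_right' mod_diff_left_eq)
  thus ?thesis using assms unfolding htg_jump_fwd_def sig_def
    by (cases x) auto
qed

lemma adj_sym: "htg_adj m n l x y \<Longrightarrow> htg_adj m n l y x"
  unfolding htg_adj_def htg_vertical_def htg_flat_def by auto


definition walk :: "nat \<Rightarrow> nat \<Rightarrow> int \<Rightarrow> (nat \<times> nat) list \<Rightarrow> bool" where
  "walk m n l W \<longleftrightarrow> W \<noteq> [] \<and> set W \<subseteq> htg_V m n \<and>
     (\<forall>k. Suc k < length W \<longrightarrow> htg_adj m n l (W ! k) (W ! Suc k))"

lemma walk_path:
  "walk m n l W \<Longrightarrow> \<exists>Q. htg_path m n l Q \<and> hd Q = hd W \<and> last Q = last W \<and> length Q \<le> length W"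
proof (induction "length W" arbitrary: W rule: less_induct)
  case less
  show ?case
  proof (cases "distinct W")
    case True
    then show ?thesis using less.prems unfolding walk_def htg_path_def by blast
  next
    case False
    then obtain i j where ij: "i < j" "j < length W" "W ! i = W ! j"
      by (metis distinct_conv_nth linorder_neqE_nat)
    define W' where "W' = take i W @ drop j W"
    have len: "length W' = i + (length W - j)" using ij unfolding W'_def by simp
    have nth1: "W' ! k = W ! k" if "k < i" for k using that ij unfolding W'_def by (simp add: nth_append)
    have nth2: "W' ! k = W ! (j + k - i)" if "k \<ge> i" "k < length W'" for k
      using that ij len unfolding W'_def by (simp add: nth_append)
    have w: "walk m n l W'"
      unfolding walk_def
    proof (intro conjI allI impI)
      show "W' \<noteq> []" using len ij by auto
      show "set W' \<subseteq> htg_V m n" using less.prems unfolding walk_def W'_def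
        by (auto dest: in_set_takeD in_set_dropD)
    next
      fix k assume k: "Suc k < length W'"
      have adj: "htg_adj m n l (W ! k') (W ! Suc k')" if "Suc k' < length W" for k'
        using less.prems that unfolding walk_def by blast
      show "htg_adj m n l (W' ! k) (W' ! Suc k)"
      proof (cases "Suc k < i")
        case True then show ?thesis using nth1 adj ij by simp
      next
        case F: False
        show ?thesis
        proof (cases "Suc k = i")
          case True
          then have "W' ! k = W ! k" "W' ! Suc k = W ! Suc k" using nth1 nth2 k ij by auto
          moreover have "W' ! Suc k = W ! j" using nth2[of "Suc k"] k True by simp
          ultimately show ?thesis using adj[of k] ij True by (metis Suc_lessD order.strict_trans)
        next
          case False
          then have "k \<ge> i" using F by simp
          then have "W' ! k = W ! (j + k - i)" "W' ! Suc k = W ! Suc (j + k - i)"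
            using nth2[of k] nth2[of "Suc k"] k by (auto simp: Suc_diff_le)
          moreover have "Suc (j + k - i) < length W" using k len \<open>k \<ge> i\<close> by simp
          ultimately show ?thesis using adj by simp
        qed
      qed
    qed
    have "length W' < length W" using len ij by simp
    then obtain Q where Q: "htg_path m n l Q" "hd Q = hd W'" "last Q = last W'" "length Q \<le> length W'"
      using less.hyps w by blast
    have "hd W' = hd W"
    proof (cases "i = 0")
      case True
      then have "hd W' = W ! j" unfolding W'_def using ij by (simp add: hd_drop_conv_nth)
      then show ?thesis using ij True by (metis hd_conv_nth list.size(3) not_less_zero)
    next
      case False
      then show ?thesis unfolding W'_def using ij by (cases W) (auto simp: take_Suc_conv_app_nth gr0_conv_Suc)
    qed
    moreover have "last W' = last W" unfolding W'_def using ij by simp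
    ultimately show ?thesis using Q \<open>length W' < length W\<close> by auto
  qed
qed

lemma shortest_rev:
  assumes "htg_shortest_path m n l P"
  shows "htg_shortest_path m n l (rev P)"
proof -
  have p: "htg_path m n l P" using assms unfolding htg_shortest_path_def by simp
  have "htg_path m n l (rev P)"
    unfolding htg_path_def
  proof (intro conjI allI impI)
    show "rev P \<noteq> []" "distinct (rev P)" "set (rev P) \<subseteq> htg_V m n" using p unfolding htg_path_def by auto
  next
    fix k assume k: "Suc k < length (rev P)"
    have "htg_adj m n l (P ! (length P - 2 - k)) (P ! Suc (length P - 2 - k))"
      using p k unfolding htg_path_def by auto
    moreover have "Suc (length P - 2 - k) = length P - 1 - k" using k by simp
    ultimately show "htg_adj m n l (rev P ! k) (rev P ! Suc k)"
      using k by (simp add: rev_nth adj_sym)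
  qed
  moreover have "length (rev P) \<le> length Q" if "htg_path m n l Q" "hd Q = hd (rev P)" "last Q = last (rev P)" for Q
  proof -
    have "htg_path m n l (rev Q)" using that(1) unfolding htg_path_def
    proof (intro conjI allI impI)
      assume q: "Q \<noteq> [] \<and> distinct Q \<and> set Q \<subseteq> htg_V m n \<and> (\<forall>k. Suc k < length Q \<longrightarrow> htg_adj m n l (Q ! k) (Q ! Suc k))"
      then show "rev Q \<noteq> []" "distinct (rev Q)" "set (rev Q) \<subseteq> htg_V m n" by auto
      fix k assume k: "Suc k < length (rev Q)"
      have "htg_adj m n l (Q ! (length Q - 2 - k)) (Q ! Suc (length Q - 2 - k))"
        using q k by auto
      moreover have "Suc (length Q - 2 - k) = length Q - 1 - k" using k by simp
      ultimately show "htg_adj m n l (rev Q ! k) (rev Q ! Suc k)"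
        using k by (simp add: rev_nth adj_sym)
    qed
    moreover have "hd (rev Q) = hd P" "last (rev Q) = last P" using that p unfolding htg_path_def
      by (auto simp: hd_rev last_rev)
    ultimately show ?thesis using assms unfolding htg_shortest_path_def by auto
  qed
  ultimately show ?thesis unfolding htg_shortest_path_def by blast
qed


lemma core:
  assumes par: "htg_params m n l" and sp: "htg_shortest_path m n l P"
    and ij: "i < j" "Suc j < length P"
    and e1: "sig m n s (P ! Suc i) = P ! i"
    and e2: "sig m n s (P ! j) = P ! Suc j"
    and sm: "s mod 2 = int m mod 2"
    and nj: "\<forall>k. i < k \<and> k < j \<longrightarrow> \<not> htg_jump_fwd m n l (P ! k) (P ! Suc k) \<and> \<not> htg_jump_fwd m n l (P ! Suc k) (P ! k)"
  shows False
proof -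
  define L where "L = length P"
  have n0: "n > 0" and m1: "m \<ge> 1" and en: "even n" and lm: "l mod 2 = int m mod 2"
    using par unfolding htg_params_def by auto
  have p: "htg_path m n l P" using sp unfolding htg_shortest_path_def by simp
  have A: "htg_adj m n l (P ! k) (P ! Suc k)" if "Suc k < L" for k
    using p that unfolding htg_path_def L_def by blast
  have V: "P ! k \<in> htg_V m n" if "k < L" for k
    using p that unfolding htg_path_def L_def by (meson nth_mem subsetD)
  have NJ: "htg_adj m n l (sig m n s (P ! k)) (sig m n s (P ! Suc k))" if "i < k" "k < j" for k
  proof -
    have "htg_adj m n l (P ! k) (P ! Suc k)" using A that ij L_def by simp
    then have "htg_vertical n (P ! k) (P ! Suc k) \<or> htg_flat m (P ! k) (P ! Suc k)"
      using nj that unfolding htg_adj_def by blast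
    then show ?thesis using sig_vert[OF n0] sig_flat[OF n0 en sm] sig_V[OF m1 n0]
      unfolding htg_adj_def by blast
  qed
  define f where "f k = (if k < i then P ! k else if k < j then sig m n s (P ! Suc k) else P ! (k + 2))" for k
  define W where "W = map f [0..<L - 2]"
  have lenW: "length W = L - 2" unfolding W_def by simp
  have Wk: "W ! k = f k" if "k < L - 2" for k using that unfolding W_def by simp
  have w: "walk m n l W" unfolding walk_def
  proof (intro conjI allI impI)
    show "W \<noteq> []" using lenW ij L_def by auto
    show "set W \<subseteq> htg_V m n"
    proof
      fix x assume "x \<in> set W"
      then obtain k where k: "k < L - 2" "x = f k" unfolding W_def by auto
      then show "x \<in> htg_V m n" unfolding f_def using V sig_V[OF m1 n0] by auto
    qed
  next
    fix k assume k: "Suc k < length W"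
    then have k2: "Suc k < L - 2" using lenW by simp
    have "htg_adj m n l (f k) (f (Suc k))"
    proof (cases "Suc k < i")
      case True then show ?thesis unfolding f_def using A k2 by simp
    next
      case c1: False
      show ?thesis
      proof (cases "Suc k = i")
        case True then show ?thesis unfolding f_def using A[of k] k2 ij e1 by simp
      next
        case c2: False
        show ?thesis
        proof (cases "Suc k < j")
          case True then show ?thesis unfolding f_def using NJ[of "Suc k"] c1 c2 by simp
        next
          case c3: False
          show ?thesis
          proof (cases "Suc k = j")
            case True then show ?thesis unfolding f_def using A[of "Suc j"] k2 ij e2 c1 c2 by simp
          next
            case False then show ?thesis unfolding f_def using A[of "k + 2"] k2 c1 c2 c3 by simp
          qed
        qed
      qed
    qed
    then show "htg_adj m n l (W ! k) (W ! Suc k)" using Wk k2 by simp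
  qed
  have "hd W = hd P"
  proof -
    have "0 < L - 2" using ij L_def by simp
    then have "hd W = f 0" using lenW Wk[of 0] by (metis hd_conv_nth list.size(3) less_numeral_extra(3))
    also have "\<dots> = P ! 0" unfolding f_def using e1 ij by auto
    finally show ?thesis using ij by (metis hd_conv_nth list.size(3) not_less_zero)
  qed
  moreover have "last W = last P"
  proof -
    have l3: "L - 3 < L - 2" "L - 2 - 1 = L - 3" using ij L_def by auto
    have "W \<noteq> []" using lenW ij L_def by auto
    then have "last W = W ! (L - 3)" using lenW l3 by (simp add: last_conv_nth)
    also have "\<dots> = f (L - 3)" using Wk l3 by simp
    finally have "last W = f (L - 3)" .
    also have "\<dots> = P ! (L - 1)"
    proof (cases "L - 3 < j")
      case True
      then have "j = L - 2" "Suc (L - 3) = j" "L - 1 = Suc j" using ij L_def by auto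
      then show ?thesis unfolding f_def using e2 True ij by auto
    next
      case False
      then have "L - 3 + 2 = L - 1" using ij L_def by auto
      then show ?thesis unfolding f_def using False ij by auto
    qed
    finally show ?thesis using ij L_def by (metis last_conv_nth list.size(3) not_less_zero)
  qed
  moreover obtain Q where "htg_path m n l Q" "hd Q = hd W" "last Q = last W" "length Q \<le> length W"
    using walk_path[OF w] by blast
  ultimately show False using sp lenW ij L_def unfolding htg_shortest_path_def by fastforce
qed

lemma sig_jump2:
  assumes "n > 0" "htg_jump_fwd m n l x y" "snd y < n"
  shows "sig m n (-l) x = y"
  using assms unfolding htg_jump_fwd_def sig_def by (cases y) auto

lemma params_n: "htg_params m n l \<Longrightarrow> n > 0 \<and> m \<ge> 1 \<and> l mod 2 = int m mod 2 \<and> (-l) mod 2 = int m mod 2"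
proof -
  assume "htg_params m n l"
  then have "n \<ge> 4" "m \<ge> 1" "l mod 2 = int m mod 2" unfolding htg_params_def by auto
  moreover have "(-l) mod 2 = int m mod 2" using calculation(3) by presburger
  ultimately show ?thesis by auto
qed

lemma pathV: "htg_shortest_path m n l P \<Longrightarrow> k < length P \<Longrightarrow> snd (P ! k) < n"
  unfolding htg_shortest_path_def htg_path_def htg_V_def by (auto dest!: nth_mem)

lemma D:
  assumes par: "htg_params m n l" and sp: "htg_shortest_path m n l P"
    and ij: "i < j" "Suc j < length P"
    and Fi: "F i" and Bj: "B j"
    and FB: "\<And>k. htg_jump_fwd m n l (P ! k) (P ! Suc k) \<or> htg_jump_fwd m n l (P ! Suc k) (P ! k) \<Longrightarrow> F k \<or> B k"
    and e: "\<And>i' j'. i' < j' \<Longrightarrow> Suc j' < length P \<Longrightarrow> F i' \<Longrightarrow> B j' \<Longrightarrow>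
       sig m n s (P ! Suc i') = P ! i' \<and> sig m n s (P ! j') = P ! Suc j'"
    and sm: "s mod 2 = int m mod 2"
  shows False
proof -
  define j' where "j' = (LEAST k. i < k \<and> B k \<and> Suc k < length P)"
  have j'p: "i < j' \<and> B j' \<and> Suc j' < length P" unfolding j'_def
    by (rule LeastI[of _ j]) (use ij Bj in auto)
  have j'l: "j' \<le> k" if "i < k" "B k" "Suc k < length P" for k
    unfolding j'_def by (rule Least_le) (use that in auto)
  define i' where "i' = (GREATEST k. k < j' \<and> F k)"
  have i'p: "i' < j' \<and> F i'" unfolding i'_def
    by (rule GreatestI_nat[of _ i j']) (use j'p Fi in auto)
  have i'l: "k \<le> i'" if "k < j'" "F k" for k
    unfolding i'_def by (rule Greatest_le_nat[of _ k j']) (use that in auto)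
  have ii: "i \<le> i'" using i'l j'p Fi by auto
  show False
  proof (rule core[OF par sp, of i' j' s])
    show "i' < j'" "Suc j' < length P" using i'p j'p by auto
    show "sig m n s (P ! Suc i') = P ! i'" "sig m n s (P ! j') = P ! Suc j'"
      using e[of i' j'] i'p j'p by auto
    show "s mod 2 = int m mod 2" by (rule sm)
    show "\<forall>k. i' < k \<and> k < j' \<longrightarrow> \<not> htg_jump_fwd m n l (P ! k) (P ! Suc k) \<and> \<not> htg_jump_fwd m n l (P ! Suc k) (P ! k)"
    proof (intro allI impI)
      fix k assume k: "i' < k \<and> k < j'"
      have "\<not> F k" using i'l[of k] k by auto
      moreover have "\<not> B k" using j'l[of k] k ii j'p by fastforce
      ultimately show "\<not> htg_jump_fwd m n l (P ! k) (P ! Suc k) \<and> \<not> htg_jump_fwd m n l (P ! Suc k) (P ! k)"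
        using FB[of k] by blast
    qed
  qed
qed

lemma noboth:
  assumes par: "htg_params m n l" "htg_jump_fwd m n l x y" "htg_jump_fwd m n l y x"
  shows False
proof -
  have n: "even (int n)" "l mod 2 = int m mod 2" using par(1) unfolding htg_params_def by auto
  have m0: "m \<ge> 1" using par(1) unfolding htg_params_def by auto
  have "fst x = m - 1" "fst x = 0" using par(2,3) unfolding htg_jump_fwd_def by auto
  then have mm: "m = 1" using m0 by simp
  have m1: "m = 1" "snd x mod 2 = 1" "snd y mod 2 = 1" using par(2,3) mm unfolding htg_jump_fwd_def by auto
  have "int (snd y) mod 2 = (int (snd x) + l) mod 2"
    using par(2) n(1) unfolding htg_jump_fwd_def by (simp add: mod_mod_cancel)
  then show False using m1 n(2) by presburger
qed

theorem lemma6p1: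
  fixes m n :: nat and l :: int and P :: "(nat \<times> nat) list"
  assumes "htg_params m n l"
    and "htg_shortest_path m n l P"
  shows "(\<forall>k. Suc k < length P \<longrightarrow> \<not> htg_jump_fwd m n l (P ! Suc k) (P ! k))
       \<or> (\<forall>k. Suc k < length P \<longrightarrow> \<not> htg_jump_fwd m n l (P ! k) (P ! Suc k))"
proof (rule ccontr)
  assume "\<not> ?thesis"
  then obtain a b where a: "Suc a < length P" "htg_jump_fwd m n l (P ! Suc a) (P ! a)"
    and b: "Suc b < length P" "htg_jump_fwd m n l (P ! b) (P ! Suc b)" by blast
  have pn: "n > 0" "l mod 2 = int m mod 2" "(-l) mod 2 = int m mod 2" using params_n[OF assms(1)] by auto
  consider "a = b" | "b < a" | "a < b" by linarith
  then show False
  proof cases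
    case 1 then show False using noboth[OF assms(1)] a b by blast
  next
    case 2
    show False
    proof (rule D[OF assms, of b a "\<lambda>k. htg_jump_fwd m n l (P ! k) (P ! Suc k)"
          "\<lambda>k. htg_jump_fwd m n l (P ! Suc k) (P ! k)" l])
      fix i' j' assume h: "i' < j'" "Suc j' < length P" "htg_jump_fwd m n l (P ! i') (P ! Suc i')"
        "htg_jump_fwd m n l (P ! Suc j') (P ! j')"
      show "sig m n l (P ! Suc i') = P ! i' \<and> sig m n l (P ! j') = P ! Suc j'"
        using sig_jump[OF pn(1) h(3)] sig_jump[OF pn(1) h(4)] pathV[OF assms(2)] h by auto
    qed (use 2 a b pn in auto)
  next
    case 3
    show False
    proof (rule D[OF assms, of a b "\<lambda>k. htg_jump_fwd m n l (P ! Suc k) (P ! k)"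
          "\<lambda>k. htg_jump_fwd m n l (P ! k) (P ! Suc k)" "-l"])
      fix i' j' assume h: "i' < j'" "Suc j' < length P" "htg_jump_fwd m n l (P ! Suc i') (P ! i')"
        "htg_jump_fwd m n l (P ! j') (P ! Suc j')"
      show "sig m n (-l) (P ! Suc i') = P ! i' \<and> sig m n (-l) (P ! j') = P ! Suc j'"
        using sig_jump2[OF pn(1) h(3)] sig_jump2[OF pn(1) h(4)] pathV[OF assms(2)] h by auto
    qed (use 3 a b pn in auto)
  qed
qed
end
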